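(* Suppose the joint distribution of $(\boldsymbol X,Y)\in\mathbb R^p\times\mathbb R$ satisfies: (i) there are constants $\ell>2$ and $c_1>0$ with $\mathbb E[|\langle\boldsymbol\beta,\boldsymbol X\rangle|^\ell]\le c_1$ for all unit vectors $\boldsymbol\beta\in\mathbb R^p$; (ii) $Y$ is a continuous random variable; (iii) the central curve $\boldsymbol m(y)=\mathbb E[\boldsymbol X\mid Y=y]$ is continuous. Let $d=\dim\mathrm{span}\{\boldsymbol m(y):y\in\mathbb R\}$. Then for every $\tau>1$ there exists an integer $K=K(\tau,d)\ge d$ such that $\boldsymbol m$ is weak $(K,\tau)$-sliced stable w.r.t. $Y$.
   Context: Fix a small constant $\gamma\in(0,1)$. A continuous curve $\boldsymbol\kappa:\mathbb R\to\mathbb R^p$ is weak $(K,\tau)$-sliced stable w.r.t. $Y$ (with $K$ a positive integer, $\tau>1$) if for every $H\ge K$ and every partition $-\infty=a_0<a_1<\dots<a_H=\infty$ with $\frac{1-\gamma}{H}\le\mathbb P(a_h\le Y\le a_{h+1})\le\frac{1+\gamma}{H}$ for $h=0,\dots,H-1$, one has $\frac1H\sum_{h=0}^{H-1}\mathrm{var}(\boldsymbol\beta^\top\boldsymbol\kappa(Y)\mid a_h\le Y\le a_{h+1})\le\frac1\tau\mathrm{var}(\boldsymbol\beta^\top\boldsymbol\kappa(Y))$ for all unit $\boldsymbol\beta\in\mathbb R^p$. *)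

theory Defs
  imports "HOL-Probability.Probability"
begin

text \<open>The h-th slice (h = 0..H-1) of the partition
  -infinity = a 0 < a 1 < ... < a (H-1) < a H = +infinity:
  the closed interval [a h, a (h+1)], with infinite end points at h = 0 and h = H-1.
  The values a 0 and a H are ignored (they stand for -infinity and +infinity).\<close>
definition slice :: "(nat \<Rightarrow> real) \<Rightarrow> nat \<Rightarrow> nat \<Rightarrow> real set" where
  "slice a H h = {y. (h = 0 \<or> a h \<le> y) \<and> (h + 1 = H \<or> y \<le> a (h + 1))}"

definition var_rv :: "'a measure \<Rightarrow> ('a \<Rightarrow> real) \<Rightarrow> real" where
  "var_rv M Z = (LINT w|M. (Z w - (LINT v|M. Z v))\<^sup>2)"

definition cond_var :: "'a measure \<Rightarrow> 'a set \<Rightarrow> ('a \<Rightarrow> real) \<Rightarrow> real" where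
  "cond_var M A Z = var_rv (uniform_measure M A) Z"

definition weak_sliced_stable ::
  "real \<Rightarrow> 'a measure \<Rightarrow> ('a \<Rightarrow> real) \<Rightarrow> (real \<Rightarrow> real ^ 'p) \<Rightarrow> nat \<Rightarrow> real \<Rightarrow> bool" where
  "weak_sliced_stable \<gamma> M Y \<kappa> K \<tau> \<longleftrightarrow>
     continuous_on UNIV \<kappa> \<and> K > 0 \<and> \<tau> > 1 \<and>
     (\<forall>H a. H \<ge> K \<longrightarrow>
        (\<forall>i j. 1 \<le> i \<longrightarrow> i < j \<longrightarrow> j \<le> H - 1 \<longrightarrow> a i < a j) \<longrightarrow>
        (\<forall>h<H. (1 - \<gamma>) / real H \<le> measure M (Y -` slice a H h \<inter> space M) \<and>
                measure M (Y -` slice a H h \<inter> space M) \<le> (1 + \<gamma>) / real H) \<longrightarrow>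
        (\<forall>\<beta>::real ^ 'p. norm \<beta> = 1 \<longrightarrow>
           (1 / real H) * (\<Sum>h<H. cond_var M (Y -` slice a H h \<inter> space M) (\<lambda>w. \<beta> \<bullet> \<kappa> (Y w)))
             \<le> (1 / \<tau>) * var_rv M (\<lambda>w. \<beta> \<bullet> \<kappa> (Y w))))"

end

theory Submission
  imports Defs
begin


lemma var_le:
  fixes f :: "'a \<Rightarrow> real"
  assumes N: "prob_space N" and i1: "integrable N f" and i2: "integrable N (\<lambda>x. (f x)\<^sup>2)"
  shows "var_rv N f \<le> (LINT x|N. (f x - d)\<^sup>2)"
proof -
  interpret prob_space N by fact
  define e where "e = (LINT x|N. f x)"
  have a: "(LINT x|N. (f x - d)\<^sup>2) = (LINT x|N. (f x)\<^sup>2) - 2*d*e + d\<^sup>2"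
  proof -
    have "(LINT x|N. (f x - d)\<^sup>2) = (LINT x|N. (f x)\<^sup>2 - 2*d*f x + d\<^sup>2)"
      by (simp add: power2_diff algebra_simps)
    also have "\<dots> = (LINT x|N. (f x)\<^sup>2) - 2*d*e + d\<^sup>2"
      using i1 i2 by (simp add: e_def prob_space)
    finally show ?thesis .
  qed
  have b: "var_rv N f = (LINT x|N. (f x)\<^sup>2) - 2*e*e + e\<^sup>2"
  proof -
    have "var_rv N f = (LINT x|N. (f x)\<^sup>2 - 2*e*f x + e\<^sup>2)"
      unfolding var_rv_def e_def[symmetric] by (simp add: power2_diff algebra_simps)
    also have "\<dots> = (LINT x|N. (f x)\<^sup>2) - 2*e*e + e\<^sup>2"
      using i1 i2 by (simp add: e_def prob_space)
    finally show ?thesis .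
  qed
  have "0 \<le> (e - d)\<^sup>2" by simp
  then show ?thesis using a b by (simp add: power2_diff algebra_simps power2_eq_square)
qed

lemma uniform_measure_density_real:
  assumes "finite_measure M" "S \<in> sets M" "measure M S > 0"
  shows "uniform_measure M S = density M (\<lambda>x. ennreal (indicator S x / measure M S))"
proof -
  interpret finite_measure M by fact
  have "\<And>x. indicator S x / emeasure M S = ennreal (indicator S x / measure M S)"
    using assms by (auto simp: emeasure_eq_measure split: split_indicator
        intro: divide_ennreal[of 1, simplified ennreal_1])
  then show ?thesis unfolding uniform_measure_def by simp
qed

lemma cond_var_le:
  fixes f :: "'a \<Rightarrow> real"
  assumes M: "finite_measure M" and S: "S \<in> sets M" and P: "measure M S > 0"
    and fm: "f \<in> borel_measurable M"
    and i1: "integrable M f" and i2: "integrable M (\<lambda>x. (f x)\<^sup>2)"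
  shows "cond_var M S f \<le> (LINT x|M. indicator S x * (f x - d)\<^sup>2) / measure M S"
proof -
  interpret finite_measure M by fact
  let ?g = "\<lambda>x. indicator S x / measure M S"
  have gm: "?g \<in> borel_measurable M" using S by measurable
  have gn: "AE x in M. 0 \<le> ?g x" by auto
  have U: "uniform_measure M S = density M ?g"
    using uniform_measure_density_real[OF M S P] .
  have ps: "prob_space (uniform_measure M S)"
    by (rule prob_space_uniform_measure) (use P S in \<open>auto simp: emeasure_eq_measure\<close>)
  have int: "integrable (uniform_measure M S) h"
    if hm: "h \<in> borel_measurable M" and hi: "integrable M h" for h :: "'a \<Rightarrow> real"
  proof -
    have "integrable M (\<lambda>x. (1 / measure M S) * (indicator S x *\<^sub>R h x))"
      using integrable_mult_indicator[OF S hi] by (intro integrable_mult_right) 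
    then have "integrable M (\<lambda>x. ?g x *\<^sub>R h x)"
      by (simp add: mult.commute)
    then show ?thesis unfolding U using integrable_density[OF hm gm gn] by simp
  qed
  have "cond_var M S f \<le> (LINT x|uniform_measure M S. (f x - d)\<^sup>2)"
    unfolding cond_var_def
    by (rule var_le[OF ps int[OF fm i1] int[OF _ i2]]) (use fm in measurable)
  also have "\<dots> = (LINT x|M. ?g x *\<^sub>R (f x - d)\<^sup>2)"
    unfolding U by (rule integral_density) (use fm gm in auto)
  also have "\<dots> = (LINT x|M. indicator S x * (f x - d)\<^sup>2) / measure M S"
    by (simp add: mult.commute)
  finally show ?thesis .
qed

lemma slice_card2:
  assumes ord: "\<forall>i j. 1 \<le> i \<longrightarrow> i < j \<longrightarrow> j \<le> H - 1 \<longrightarrow> a i < a j"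
  shows "card {h. h < H \<and> y \<in> slice a H h} \<le> 2"
proof (cases "{h. h < H \<and> y \<in> slice a H h} = {}")
  case True then show ?thesis by (simp only: True card.empty)
next
  case False
  let ?A = "{h. h < H \<and> y \<in> slice a H h}"
  have fin: "finite ?A" by simp
  define h0 where "h0 = Min ?A"
  have h0A: "h0 \<in> ?A" using Min_in[OF fin False] h0_def by simp
  have "?A \<subseteq> {h0, h0+1}"
  proof
    fix h assume hA: "h \<in> ?A"
    have "h0 \<le> h" using Min_le[OF fin hA] h0_def by simp
    show "h \<in> {h0, h0+1}"
    proof (rule ccontr)
      assume "h \<notin> {h0, h0+1}"
      then have lt: "h0 + 1 < h" using \<open>h0 \<le> h\<close> by auto
      have "y \<le> a (h0+1)" using h0A hA lt unfolding slice_def by auto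
      moreover have "a h \<le> y" using hA lt unfolding slice_def by auto
      moreover have "a (h0+1) < a h" using ord lt hA by auto
      ultimately show False by simp
    qed
  qed
  then have "card ?A \<le> card {h0, h0+1}" by (intro card_mono) auto
  also have "\<dots> \<le> 2" by (simp add: card_insert_if)
  finally show ?thesis .
qed



lemma vec_nth_meas: "(\<lambda>x::real^'n. x $ i) \<in> borel_measurable borel"
  by (intro borel_measurable_continuous_onI linear_continuous_on bounded_linear_vec_nth)

lemma abs_le_1_sq: "\<bar>t::real\<bar> \<le> 1 + t * t"
proof (cases "\<bar>t\<bar> \<le> 1")
  case True
  have "0 \<le> t * t" by simp
  then show ?thesis using True by linarith
next
  case False
  then have "\<bar>t\<bar> * 1 \<le> \<bar>t\<bar> * \<bar>t\<bar>" by (intro mult_left_mono) auto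
  then show ?thesis unfolding abs_mult_self_eq by linarith
qed

lemma abs_mult_le_sq: "\<bar>a * b\<bar> \<le> a\<^sup>2 + (b::real)\<^sup>2"
proof -
  have "0 \<le> (\<bar>a\<bar> - \<bar>b\<bar>)\<^sup>2" by simp
  then have "2 * (\<bar>a\<bar> * \<bar>b\<bar>) \<le> a\<^sup>2 + b\<^sup>2"
    unfolding power2_diff power2_abs by linarith
  moreover have "0 \<le> \<bar>a\<bar> * \<bar>b\<bar>" by simp
  ultimately show ?thesis unfolding abs_mult by linarith
qed

definition sqi :: "'a measure \<Rightarrow> ('a \<Rightarrow> real) \<Rightarrow> bool" where
  "sqi M f \<longleftrightarrow> f \<in> borel_measurable M \<and> integrable M (\<lambda>w. (f w)\<^sup>2)"

context finite_measure begin

lemma sqi_int: "sqi M f \<Longrightarrow> integrable M f"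
proof -
  assume a: "sqi M f"
  have i: "integrable M (\<lambda>w. 1 + (f w)\<^sup>2)"
    using a unfolding sqi_def by (intro Bochner_Integration.integrable_add) auto
  show ?thesis
  proof (rule Bochner_Integration.integrable_bound[OF i])
    show "f \<in> borel_measurable M" using a unfolding sqi_def by simp
    show "AE x in M. norm (f x) \<le> norm (1 + (f x)\<^sup>2)"
      by (intro always_eventually allI) (simp add: power2_eq_square abs_le_1_sq)
  qed
qed

lemma sqi_mult: "sqi M f \<Longrightarrow> sqi M g \<Longrightarrow> integrable M (\<lambda>w. f w * g w)"
proof -
  assume a: "sqi M f" "sqi M g"
  have i: "integrable M (\<lambda>w. (f w)\<^sup>2 + (g w)\<^sup>2)"
    using a unfolding sqi_def by (intro Bochner_Integration.integrable_add) auto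
  show ?thesis
  proof (rule Bochner_Integration.integrable_bound[OF i])
    have fm: "f \<in> borel_measurable M" "g \<in> borel_measurable M" using a unfolding sqi_def by simp_all
    show "(\<lambda>w. f w * g w) \<in> borel_measurable M" by (rule borel_measurable_times[OF fm])
    have "norm (f x * g x) \<le> norm ((f x)\<^sup>2 + (g x)\<^sup>2)" for x
    proof -
      have "0 \<le> (f x)\<^sup>2 + (g x)\<^sup>2" by simp
      then have "norm ((f x)\<^sup>2 + (g x)\<^sup>2) = (f x)\<^sup>2 + (g x)\<^sup>2" by simp
      then show ?thesis using abs_mult_le_sq[of "f x" "g x"] by (simp only: real_norm_def)
    qed
    then show "AE x in M. norm (f x * g x) \<le> norm ((f x)\<^sup>2 + (g x)\<^sup>2)"
      by simp
  qed
qed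

lemma sqi_add: "sqi M f \<Longrightarrow> sqi M g \<Longrightarrow> sqi M (\<lambda>w. f w + g w)"
proof -
  assume a: "sqi M f" "sqi M g"
  have "integrable M (\<lambda>w. (f w)\<^sup>2 + (g w)\<^sup>2 + 2 * (f w * g w))"
  proof -
    have i1: "integrable M (\<lambda>w. (f w)\<^sup>2)" "integrable M (\<lambda>w. (g w)\<^sup>2)"
      using a unfolding sqi_def by auto
    have i2: "integrable M (\<lambda>w. 2 * (f w * g w))"
      using sqi_mult[OF a] by (rule integrable_mult_right)
    show ?thesis using Bochner_Integration.integrable_add[OF Bochner_Integration.integrable_add[OF i1] i2] .
  qed
  moreover have "(\<lambda>w. (f w + g w)\<^sup>2) = (\<lambda>w. (f w)\<^sup>2 + (g w)\<^sup>2 + 2 * (f w * g w))"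
    by (simp add: power2_sum mult.assoc)
  moreover have "(\<lambda>w. f w + g w) \<in> borel_measurable M" using a unfolding sqi_def by auto
  ultimately show ?thesis unfolding sqi_def by simp
qed

lemma sqi_cmult: "sqi M f \<Longrightarrow> sqi M (\<lambda>w. c * f w)"
  unfolding sqi_def power_mult_distrib
  by (simp add: integrable_mult_right borel_measurable_times[OF borel_measurable_const])

lemma sqi_const: "sqi M (\<lambda>w. c)"
  unfolding sqi_def by simp

lemma sqi_diff: "sqi M f \<Longrightarrow> sqi M g \<Longrightarrow> sqi M (\<lambda>w. f w - g w)"
  using sqi_add[of f "\<lambda>w. (-1) * g w"] sqi_cmult[of g "-1"] by simp

lemma sqi_sum: "finite I \<Longrightarrow> (\<And>i. i \<in> I \<Longrightarrow> sqi M (f i)) \<Longrightarrow> sqi M (\<lambda>w. \<Sum>i\<in>I. f i w)"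
proof (induction I rule: finite_induct)
  case empty then show ?case by (simp add: sqi_const)
next
  case (insert x F) then show ?case by (simp add: sqi_add)
qed

lemma sqi_sq: "sqi M f \<Longrightarrow> integrable M (\<lambda>w. (f w)\<^sup>2)"
  unfolding sqi_def by auto

end

locale sl = prob_space M for M :: "'a measure" +
  fixes Y :: "'a \<Rightarrow> real" and m :: "real \<Rightarrow> real ^ 'p"
  assumes Ym[measurable]: "Y \<in> borel_measurable M"
    and mc: "continuous_on UNIV m"
    and sq: "\<And>i. integrable M (\<lambda>w. (m (Y w) $ i)\<^sup>2)"
begin

lemma mm[measurable]: "m \<in> borel_measurable borel"
  using mc by (rule borel_measurable_continuous_onI)

lemma Zm[measurable]: "(\<lambda>w. m (Y w)) \<in> borel_measurable M"
  by measurable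

lemma Zim[measurable]: "(\<lambda>w. m (Y w) $ i) \<in> borel_measurable M"
  by (rule measurable_compose[OF Zm vec_nth_meas])

lemma Zi: "sqi M (\<lambda>w. m (Y w) $ i)"
  unfolding sqi_def using sq by simp

lemma Zci: "sqi M (\<lambda>w. (m (Y w) - c) $ i)"
  using sqi_diff[OF Zi sqi_const] by simp

lemma sqi_inner: "sqi M (\<lambda>w. v \<bullet> (m (Y w) - c))"
proof -
  have "sqi M (\<lambda>w. \<Sum>i\<in>UNIV. v $ i * (m (Y w) - c) $ i)"
    by (rule sqi_sum, simp, rule sqi_cmult, rule Zci)
  then show ?thesis unfolding inner_vec_def inner_real_def .
qed

lemma sqi_innerZ: "sqi M (\<lambda>w. v \<bullet> m (Y w))"
  using sqi_inner[of v 0] by simp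

lemma norm2_vec: "(norm (x::real^'n))\<^sup>2 = (\<Sum>i\<in>UNIV. (x$i)\<^sup>2)"
  by (simp add: norm_vec_def L2_set_def sum_nonneg)

lemma int_norm2: "integrable M (\<lambda>w. (norm (m (Y w) - c))\<^sup>2)"
proof -
  have "\<And>i. integrable M (\<lambda>w. ((m (Y w) - c) $ i)\<^sup>2)" using sqi_sq[OF Zci] by simp
  then have "integrable M (\<lambda>w. \<Sum>i\<in>UNIV. ((m (Y w) - c) $ i)\<^sup>2)" by auto
  then show ?thesis by (simp only: norm2_vec)
qed

end


definition stepf :: "(real \<Rightarrow> real^'p) \<Rightarrow> nat \<Rightarrow> nat \<Rightarrow> real \<Rightarrow> real^'p" where
  "stepf m R n y = (if \<bar>y\<bar> \<le> real R then m (of_int \<lfloor>y * real n\<rfloor> / real n) else 0)"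

definition grid :: "nat \<Rightarrow> nat \<Rightarrow> real set" where
  "grid R n = (\<lambda>k::int. of_int k / real n) ` {-(int R * int n) .. int R * int n}"

lemma grid_finite: "finite (grid R n)"
  unfolding grid_def by simp

lemma grid_card: "card (grid R n) \<le> 2 * R * n + 1"
proof -
  have "card (grid R n) \<le> card {-(int R * int n) .. int R * int n}"
    unfolding grid_def by (rule card_image_le) simp
  also have "\<dots> = 2 * R * n + 1"
  proof -
    have "int (2 * R * n + 1) = 2 * (int R * int n) + 1" by simp
    then show ?thesis by (metis card_atLeastAtMost_int diff_minus_eq_add mult_2 nat_int)
  qed
  finally show ?thesis .
qed

lemma grid_mem: "n > 0 \<Longrightarrow> \<bar>k\<bar> \<le> int R * int n \<Longrightarrow> of_int k / real n \<in> grid R n"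
  unfolding grid_def by (intro imageI) (simp add: abs_le_iff)

lemma grid_R: "n > 0 \<Longrightarrow> real R \<in> grid R n" "n > 0 \<Longrightarrow> - real R \<in> grid R n"
proof -
  assume n: "n > 0"
  have "of_int (int R * int n) / real n \<in> grid R n" by (rule grid_mem[OF n]) simp
  then show "real R \<in> grid R n" using n by simp
  have "of_int (- (int R * int n)) / real n \<in> grid R n" by (rule grid_mem[OF n]) simp
  then show "- real R \<in> grid R n" using n by simp
qed

lemma stepf_pt:
  assumes n: "n > 0" and y: "\<bar>y\<bar> \<le> real R"
  shows "\<bar>of_int \<lfloor>y * real n\<rfloor> / real n\<bar> \<le> real R"
    and "\<bar>y - of_int \<lfloor>y * real n\<rfloor> / real n\<bar> < 1 / real n"
proof -
  let ?k = "\<lfloor>y * real n\<rfloor>"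
  have N: "real n > 0" using n by simp
  have k1: "of_int ?k \<le> y * real n" by simp
  have k2: "y * real n < of_int ?k + 1" by linarith
  have "- (real R * real n) \<le> y * real n" using mult_right_mono[of "- real R" y "real n"] y N by simp
  then have "real_of_int (-(int R * int n)) \<le> y * real n" by simp
  then have "-(int R * int n) \<le> ?k" by (simp only: le_floor_iff)
  then have "real_of_int (-(int R * int n)) \<le> of_int ?k" by (simp only: of_int_le_iff)
  then have k3: "- (real R * real n) \<le> of_int ?k" by simp
  have "of_int ?k / real n \<le> y" using k1 N by (simp add: divide_le_eq)
  moreover have "- real R \<le> of_int ?k / real n" using k3 N by (simp add: le_divide_eq)
  ultimately show "\<bar>of_int ?k / real n\<bar> \<le> real R" using y by linarith
  have "y - of_int ?k / real n = (y * real n - of_int ?k) / real n" using N by (simp add: field_simps)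
  moreover have "0 \<le> y * real n - of_int ?k" "y * real n - of_int ?k < 1" using k1 k2 by linarith+
  ultimately show "\<bar>y - of_int ?k / real n\<bar> < 1 / real n" using N by (simp add: divide_strict_right_mono)
qed

lemma stepf_const:
  assumes n: "n > 0" and le: "y1 \<le> y2" and nog: "\<forall>g\<in>grid R n. \<not> (y1 \<le> g \<and> g \<le> y2)"
  shows "stepf m R n y1 = stepf m R n y2"
proof -
  have N: "real n > 0" using n by simp
  consider "\<bar>y1\<bar> \<le> real R" "\<bar>y2\<bar> \<le> real R" | "y1 < - real R" | "y1 > real R" | "\<bar>y1\<bar> \<le> real R" "y2 > real R"
    using le by linarith
  then show ?thesis
  proof cases
    case 1
    have "\<lfloor>y1 * real n\<rfloor> = \<lfloor>y2 * real n\<rfloor>"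
    proof (rule ccontr)
      assume ne: "\<lfloor>y1 * real n\<rfloor> \<noteq> \<lfloor>y2 * real n\<rfloor>"
      let ?k = "\<lfloor>y2 * real n\<rfloor>"
      have "y1 * real n \<le> y2 * real n" using le N by (simp add: mult_right_mono)
      then have "\<lfloor>y1 * real n\<rfloor> \<le> ?k" by (rule floor_mono)
      with ne have lt: "\<lfloor>y1 * real n\<rfloor> + 1 \<le> ?k" by simp
      have a1: "y1 * real n < of_int ?k" using lt by linarith
      have a2: "of_int ?k \<le> y2 * real n" by simp
      have "y2 * real n \<le> real R * real n" using 1 N by (simp add: mult_right_mono)
      moreover have "- (real R * real n) \<le> y1 * real n" using mult_right_mono[of "- real R" y1 "real n"] 1 N by simp
      ultimately have "\<bar>of_int ?k\<bar> \<le> real R * real n" using a1 a2 by linarith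
      then have "real_of_int \<bar>?k\<bar> \<le> real_of_int (int R * int n)" by simp
      then have "\<bar>?k\<bar> \<le> int R * int n" by (simp only: of_int_le_iff)
      then have g: "of_int ?k / real n \<in> grid R n" by (rule grid_mem[OF n])
      have "y1 \<le> of_int ?k / real n" using a1 N by (simp add: le_divide_eq)
      moreover have "of_int ?k / real n \<le> y2" using a2 N by (simp add: divide_le_eq)
      ultimately show False using nog g by blast
    qed
    then show ?thesis using 1 unfolding stepf_def by simp
  next
    case 2
    have "y2 < - real R"
    proof (rule ccontr)
      assume "\<not> y2 < - real R"
      then have "y1 \<le> - real R" "- real R \<le> y2" using 2 by linarith+
      then show False using nog grid_R(2)[OF n] by blast
    qed
    then show ?thesis using 2 unfolding stepf_def by simp
  next
    case 3
    then show ?thesis using le unfolding stepf_def by simp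
  next
    case 4
    then have "y1 \<le> real R" "real R \<le> y2" by linarith+
    then show ?thesis using nog grid_R(1)[OF n] by blast
  qed
qed

lemma stepf_meas:
  assumes [measurable]: "m \<in> borel_measurable borel"
  shows "stepf m R n \<in> borel_measurable borel"
  unfolding stepf_def by measurable



lemma slice_borel: "slice a H h \<in> sets borel"
proof -
  have "slice a H h = (if h = 0 then UNIV else {a h..}) \<inter> (if h + 1 = H then UNIV else {..a (h+1)})"
    unfolding slice_def by auto
  then show ?thesis by simp
qed

lemma norm_add_sq_le: "(norm (x + y :: 'a::real_normed_vector))\<^sup>2 \<le> 2 * (norm x)\<^sup>2 + 2 * (norm y)\<^sup>2"
proof -
  have "norm (x + y) \<le> norm x + norm y" by (rule norm_triangle_ineq)
  then have "(norm (x + y))\<^sup>2 \<le> (norm x + norm y)\<^sup>2" by (simp add: power_mono)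
  also have "\<dots> \<le> 2 * (norm x)\<^sup>2 + 2 * (norm y)\<^sup>2"
  proof -
    have "0 \<le> (norm x - norm y)\<^sup>2" by simp
    then show ?thesis unfolding power2_sum power2_diff by linarith
  qed
  finally show ?thesis .
qed

context sl begin

lemma Sl_sets: "Y -` slice a H h \<inter> space M \<in> sets M"
  using measurable_sets[OF Ym slice_borel] .

lemma sum_ind_card:
  assumes "w \<in> space M"
  shows "(\<Sum>h<H. indicator (Y -` slice a H h \<inter> space M) w) = real (card {h. h < H \<and> Y w \<in> slice a H h})"
proof -
  have "(\<Sum>h<H. indicator (Y -` slice a H h \<inter> space M) w) = (\<Sum>h<H. (indicator {h. Y w \<in> slice a H h} h :: real))"
    using assms by (intro sum.cong) (auto split: split_indicator)
  also have "\<dots> = real (card ({..<H} \<inter> {h. Y w \<in> slice a H h}))"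
    by (simp add: indicator_def sum.If_cases Int_def)
  also have "{..<H} \<inter> {h. Y w \<in> slice a H h} = {h. h < H \<and> Y w \<in> slice a H h}" by auto
  finally show ?thesis .
qed

lemma sum2:
  fixes psi :: "'a \<Rightarrow> real"
  assumes ord: "\<forall>i j. 1 \<le> i \<longrightarrow> i < j \<longrightarrow> j \<le> H - 1 \<longrightarrow> a i < a j"
    and psi: "integrable M psi" "\<And>w. w \<in> space M \<Longrightarrow> 0 \<le> psi w"
  shows "(\<Sum>h<H. LINT w|M. indicator (Y -` slice a H h \<inter> space M) w * psi w) \<le> 2 * (LINT w|M. psi w)"
proof -
  have ii: "integrable M (\<lambda>w. indicator (Y -` slice a H h \<inter> space M) w * psi w)" for h
    using integrable_real_mult_indicator[OF Sl_sets psi(1)] by (simp add: mult.commute)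
  have "(\<Sum>h<H. LINT w|M. indicator (Y -` slice a H h \<inter> space M) w * psi w)
      = (LINT w|M. (\<Sum>h<H. indicator (Y -` slice a H h \<inter> space M) w * psi w))"
    by (rule Bochner_Integration.integral_sum[symmetric]) (rule ii)
  also have "\<dots> \<le> (LINT w|M. 2 * psi w)"
  proof (rule integral_mono)
    show "integrable M (\<lambda>w. \<Sum>h<H. indicator (Y -` slice a H h \<inter> space M) w * psi w)"
      by (rule Bochner_Integration.integrable_sum) (rule ii)
    show "integrable M (\<lambda>w. 2 * psi w)" using psi(1) by simp
    fix w assume w: "w \<in> space M"
    have "(\<Sum>h<H. indicator (Y -` slice a H h \<inter> space M) w * psi w)
        = (\<Sum>h<H. indicator (Y -` slice a H h \<inter> space M) w) * psi w"
      by (simp add: sum_distrib_right)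
    also have "\<dots> = real (card {h. h < H \<and> Y w \<in> slice a H h}) * psi w"
      using sum_ind_card[OF w] by simp
    also have "\<dots> \<le> 2 * psi w"
      using slice_card2[OF ord, of "Y w"] psi(2)[OF w] by (intro mult_right_mono) auto
    finally show "(\<Sum>h<H. indicator (Y -` slice a H h \<inter> space M) w * psi w) \<le> 2 * psi w" .
  qed
  finally show ?thesis by simp
qed

lemma tail:
  assumes e: "e > 0"
  shows "\<exists>R::nat. (LINT w|M. indicator {w\<in>space M. real R < \<bar>Y w\<bar>} w * (norm (m (Y w)))\<^sup>2) < e"
proof -
  let ?s = "\<lambda>i::nat. \<lambda>w. indicator {w\<in>space M. real i < \<bar>Y w\<bar>} w * (norm (m (Y w)))\<^sup>2"
  have "(\<lambda>i. integral\<^sup>L M (?s i)) \<longlonglongrightarrow> integral\<^sup>L M (\<lambda>w. 0::real)"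
  proof (rule integral_dominated_convergence[where w="\<lambda>w. (norm (m (Y w)))\<^sup>2"])
    show "(\<lambda>w. 0::real) \<in> borel_measurable M" by simp
    show "?s i \<in> borel_measurable M" for i by measurable
    show "integrable M (\<lambda>w. (norm (m (Y w)))\<^sup>2)" using int_norm2[of 0] by simp
    show "AE x in M. (\<lambda>i. ?s i x) \<longlonglongrightarrow> 0"
    proof (intro always_eventually allI)
      fix x
      obtain N :: nat where N: "\<bar>Y x\<bar> \<le> real N" using real_arch_simple by blast
      have "eventually (\<lambda>i. ?s i x = 0) sequentially"
        unfolding eventually_sequentially
        by (rule exI[of _ N]) (use N in \<open>auto split: split_indicator\<close>)
      then show "(\<lambda>i. ?s i x) \<longlonglongrightarrow> 0" by (rule tendsto_eventually)
    qed
    show "AE x in M. norm (?s i x) \<le> (norm (m (Y x)))\<^sup>2" for i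
      by (intro always_eventually allI) (auto split: split_indicator)
  qed
  then have "eventually (\<lambda>i. integral\<^sup>L M (?s i) < e) sequentially"
    using e by (intro order_tendstoD(2)) auto
  then obtain N where "\<forall>i\<ge>N. integral\<^sup>L M (?s i) < e" unfolding eventually_sequentially by blast
  then have "integral\<^sup>L M (?s N) < e" by simp
  then show ?thesis by blast
qed

end


context sl begin

lemma approx:
  assumes e: "\<epsilon> > 0"
  shows "\<exists>K>0. \<forall>H a. K \<le> H \<longrightarrow> (\<forall>i j. 1 \<le> i \<longrightarrow> i < j \<longrightarrow> j \<le> H - 1 \<longrightarrow> a i < a j) \<longrightarrow>
     (\<forall>h<H. measure M (Y -` slice a H h \<inter> space M) \<le> 2 / real H) \<longrightarrow>
     (\<exists>c. (\<Sum>h<H. LINT w|M. indicator (Y -` slice a H h \<inter> space M) w * (norm (m (Y w) - c h))\<^sup>2) \<le> \<epsilon>)"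
proof -
  obtain R :: nat where R: "(LINT w|M. indicator {w\<in>space M. real R < \<bar>Y w\<bar>} w * (norm (m (Y w)))\<^sup>2) < \<epsilon>/16"
    using tail[of "\<epsilon>/16"] e by auto
  have uc: "uniformly_continuous_on {-real R..real R} m"
    by (rule compact_uniformly_continuous) (auto intro: continuous_on_subset[OF mc])
  define e1 where "e1 = min 1 (\<epsilon>/16)"
  have e1: "e1 > 0" "e1 \<le> 1" "e1 \<le> \<epsilon>/16" using e unfolding e1_def by auto
  obtain d where d: "d > 0"
    "\<And>x x'. x \<in> {-real R..real R} \<Longrightarrow> x' \<in> {-real R..real R} \<Longrightarrow> dist x' x < d \<Longrightarrow> dist (m x') (m x) < e1"
    using uniformly_continuous_onE[OF uc e1(1)] by metis
  obtain n :: nat where n: "n > 0" "inverse (real n) < d" using ex_inverse_of_nat_less[OF d(1)] by auto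
  define s where "s = stepf m R n"
  have close: "(norm (m y - s y))\<^sup>2 \<le> \<epsilon>/16" if y: "\<bar>y\<bar> \<le> real R" for y
  proof -
    define p where "p = of_int \<lfloor>y * real n\<rfloor> / real n"
    have p1: "\<bar>p\<bar> \<le> real R" and p2: "\<bar>y - p\<bar> < 1 / real n"
      using stepf_pt[OF n(1) y] unfolding p_def by auto
    have "dist y p < d" using p2 n(2) by (simp add: dist_real_def inverse_eq_divide)
    then have "dist (m y) (m p) < e1" using d(2)[of p y] p1 y by (auto simp: abs_le_iff)
    then have nl: "norm (m y - s y) < e1" using y unfolding s_def stepf_def p_def dist_norm by simp
    have "(norm (m y - s y))\<^sup>2 \<le> e1 * e1"
      unfolding power2_eq_square using nl e1 by (intro mult_mono) auto
    also have "\<dots> \<le> e1 * 1" using e1 by (intro mult_left_mono) auto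
    finally show ?thesis using e1 by simp
  qed
  have "compact (m ` {-real R..real R})"
    by (rule compact_continuous_image) (auto intro: continuous_on_subset[OF mc])
  then obtain B where B: "B > 0" "\<And>x. x \<in> m ` {-real R..real R} \<Longrightarrow> norm x \<le> B"
    using compact_imp_bounded bounded_pos by metis
  have sB: "norm (s y) \<le> B" for y
  proof (cases "\<bar>y\<bar> \<le> real R")
    case True
    then have "\<bar>of_int \<lfloor>y * real n\<rfloor> / real n\<bar> \<le> real R" using stepf_pt[OF n(1)] by auto
    then have "of_int \<lfloor>y * real n\<rfloor> / real n \<le> real R \<and> - (of_int \<lfloor>y * real n\<rfloor> / real n) \<le> real R"
      by (rule abs_le_iff[THEN iffD1])
    then have "of_int \<lfloor>y * real n\<rfloor> / real n \<in> {-real R..real R}" unfolding atLeastAtMost_iff by linarith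
    then have "norm (m (of_int \<lfloor>y * real n\<rfloor> / real n)) \<le> B" using B(2) by blast
    then show ?thesis using True unfolding s_def stepf_def by simp
  next
    case False then show ?thesis using B(1) unfolding s_def stepf_def by simp
  qed
  have sm[measurable]: "s \<in> borel_measurable borel" unfolding s_def by (rule stepf_meas[OF mm])
  define psi where "psi w = (norm (m (Y w) - s (Y w)))\<^sup>2" for w
  have psim[measurable]: "psi \<in> borel_measurable M" unfolding psi_def by measurable
  have psi_nn: "0 \<le> psi w" for w unfolding psi_def by simp
  have psi_int: "integrable M psi"
  proof (rule Bochner_Integration.integrable_bound[where f="\<lambda>w. 2 * (norm (m (Y w) - 0))\<^sup>2 + 2 * B\<^sup>2"])
    show "integrable M (\<lambda>w. 2 * (norm (m (Y w) - 0))\<^sup>2 + 2 * B\<^sup>2)"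
      using int_norm2[of 0] by (intro Bochner_Integration.integrable_add integrable_mult_right) auto
    show "psi \<in> borel_measurable M" by simp
    have "norm (psi w) \<le> norm (2 * (norm (m (Y w) - 0))\<^sup>2 + 2 * B\<^sup>2)" for w
    proof -
      have "psi w \<le> 2 * (norm (m (Y w)))\<^sup>2 + 2 * (norm (- s (Y w)))\<^sup>2"
        unfolding psi_def using norm_add_sq_le[of "m (Y w)" "- s (Y w)"] by simp
      also have "(norm (- s (Y w)))\<^sup>2 \<le> B\<^sup>2" using sB[of "Y w"] by (simp add: power_mono)
      finally show ?thesis using psi_nn[of w] by simp
    qed
    then show "AE w in M. norm (psi w) \<le> norm (2 * (norm (m (Y w) - 0))\<^sup>2 + 2 * B\<^sup>2)" by simp
  qed
  let ?T = "\<lambda>w. indicator {w\<in>space M. real R < \<bar>Y w\<bar>} w * (norm (m (Y w)))\<^sup>2"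
  have Tint: "integrable M ?T"
    using integrable_mult_indicator[of "{w\<in>space M. real R < \<bar>Y w\<bar>}" M "\<lambda>w. (norm (m (Y w) - 0))\<^sup>2"] int_norm2[of 0]
    by simp
  have psi_le: "(LINT w|M. psi w) \<le> \<epsilon>/8"
  proof -
    have "(LINT w|M. psi w) \<le> (LINT w|M. \<epsilon>/16 + ?T w)"
    proof (rule integral_mono)
      show "integrable M psi" by (rule psi_int)
      show "integrable M (\<lambda>w. \<epsilon>/16 + ?T w)" using Tint by simp
      fix w assume w: "w \<in> space M"
      show "psi w \<le> \<epsilon>/16 + ?T w"
      proof (cases "\<bar>Y w\<bar> \<le> real R")
        case True
        then show ?thesis using close[OF True] w unfolding psi_def by (simp add: indicator_def)
      next
        case False
        then have "s (Y w) = 0" unfolding s_def stepf_def by simp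
        then show ?thesis using False w e unfolding psi_def by (simp add: indicator_def)
      qed
    qed
    also have "\<dots> = \<epsilon>/16 + (LINT w|M. ?T w)" using Tint by (simp add: prob_space)
    finally show ?thesis using R by simp
  qed
  define G where "G = grid R n"
  define C where "C = 16 * B\<^sup>2 * (2 * real R * real n + 1)"
  have "0 \<le> 2 * real R * real n" by simp
  then have "0 < 2 * real R * real n + 1" by linarith
  then have C: "C > 0" unfolding C_def using B(1) by (intro mult_pos_pos) auto
  define K where "K = nat \<lceil>C / \<epsilon>\<rceil> + 1"
  have K: "K > 0" unfolding K_def by simp
  show ?thesis
  proof (intro exI[of _ K] conjI K allI impI)
    fix H :: nat and a :: "nat \<Rightarrow> real"
    assume HK: "K \<le> H"
      and ord: "\<forall>i j. 1 \<le> i \<longrightarrow> i < j \<longrightarrow> j \<le> H - 1 \<longrightarrow> a i < a j"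
      and pr: "\<forall>h<H. measure M (Y -` slice a H h \<inter> space M) \<le> 2 / real H"
    let ?S = "\<lambda>h. Y -` slice a H h \<inter> space M"
    define good where "good h \<longleftrightarrow> G \<inter> slice a H h = {}" for h
    define c where "c h = (if good h then s (SOME y. y \<in> slice a H h) else 0)" for h
    have sc: "s y = c h" if g: "good h" and y: "y \<in> slice a H h" for h y
    proof -
      define y0 where "y0 = (SOME y. y \<in> slice a H h)"
      have y0: "y0 \<in> slice a H h" unfolding y0_def using y by (rule someI)
      have nog: "\<forall>g\<in>G. \<not> (min y y0 \<le> g \<and> g \<le> max y y0)"
      proof (intro ballI notI)
        fix g assume gG: "g \<in> G" and gb: "min y y0 \<le> g \<and> g \<le> max y y0"
        have "g \<in> slice a H h" using y y0 gb unfolding slice_def by auto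
        then show False using g gG unfolding good_def by auto
      qed
      have "s (min y y0) = s (max y y0)"
        unfolding s_def by (rule stepf_const[OF n(1)]) (use nog G_def in auto)
      then have "s y = s y0" by (cases "y \<le> y0") (auto simp: min_def max_def)
      then show ?thesis using g unfolding c_def y0_def by simp
    qed
    have Hpos: "H > 0" using HK K by simp
    have ptw: "indicator (?S h) w * (norm (m (Y w) - c h))\<^sup>2
        \<le> 2 * (indicator (?S h) w * psi w) + (if good h then 0 else 2 * B\<^sup>2 * indicator (?S h) w)"
      if w: "w \<in> space M" for h w
    proof (cases "w \<in> ?S h")
      case False then show ?thesis by simp
    next
      case True
      have "(norm (m (Y w) - c h))\<^sup>2 = (norm ((m (Y w) - s (Y w)) + (s (Y w) - c h)))\<^sup>2" by simp
      also have "\<dots> \<le> 2 * psi w + 2 * (norm (s (Y w) - c h))\<^sup>2"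
        unfolding psi_def by (rule norm_add_sq_le)
      also have "2 * (norm (s (Y w) - c h))\<^sup>2 \<le> (if good h then 0 else 2 * B\<^sup>2)"
      proof (cases "good h")
        case True then show ?thesis using sc[of h "Y w"] \<open>w \<in> ?S h\<close> by simp
      next
        case False
        then have "c h = 0" unfolding c_def by simp
        then show ?thesis using False sB[of "Y w"] by (simp add: power_mono)
      qed
      finally show ?thesis using True by (cases "good h") simp_all
    qed
    have iS: "integrable M (\<lambda>w. indicator (?S h) w * f w)" if "integrable M f" for f :: "'a \<Rightarrow> real" and h
      using integrable_real_mult_indicator[OF Sl_sets that] by (simp add: mult.commute)
    have hb: "(LINT w|M. indicator (?S h) w * (norm (m (Y w) - c h))\<^sup>2)
        \<le> 2 * (LINT w|M. indicator (?S h) w * psi w) + (if good h then 0 else 2 * B\<^sup>2 * measure M (?S h))" for h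
    proof -
      have "(LINT w|M. indicator (?S h) w * (norm (m (Y w) - c h))\<^sup>2)
          \<le> (LINT w|M. 2 * (indicator (?S h) w * psi w) + (if good h then 0 else 2 * B\<^sup>2 * indicator (?S h) w))"
      proof (rule integral_mono)
        show "integrable M (\<lambda>w. indicator (?S h) w * (norm (m (Y w) - c h))\<^sup>2)"
          by (rule iS[OF int_norm2])
        show "integrable M (\<lambda>w. 2 * (indicator (?S h) w * psi w) + (if good h then 0 else 2 * B\<^sup>2 * indicator (?S h) w))"
          using iS[OF psi_int, of h] Sl_sets[of a H h]
          by (cases "good h") (auto simp: emeasure_eq_measure intro!: Bochner_Integration.integrable_add integrable_mult_right)
        fix w assume "w \<in> space M"
        then show "indicator (?S h) w * (norm (m (Y w) - c h))\<^sup>2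
          \<le> 2 * (indicator (?S h) w * psi w) + (if good h then 0 else 2 * B\<^sup>2 * indicator (?S h) w)"
          by (rule ptw)
      qed
      also have "\<dots> = 2 * (LINT w|M. indicator (?S h) w * psi w) + (if good h then 0 else 2 * B\<^sup>2 * measure M (?S h))"
        using iS[OF psi_int, of h] Sl_sets[of a H h]
        by (cases "good h") (simp_all add: emeasure_eq_measure)
      finally show ?thesis .
    qed
    have P1: "(\<Sum>h<H. LINT w|M. indicator (?S h) w * (norm (m (Y w) - c h))\<^sup>2)
        \<le> 2 * (\<Sum>h<H. LINT w|M. indicator (?S h) w * psi w) + (\<Sum>h<H. if good h then 0 else 2 * B\<^sup>2 * measure M (?S h))"
    proof -
      have "(\<Sum>h<H. LINT w|M. indicator (?S h) w * (norm (m (Y w) - c h))\<^sup>2)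
        \<le> (\<Sum>h<H. 2 * (LINT w|M. indicator (?S h) w * psi w) + (if good h then 0 else 2 * B\<^sup>2 * measure M (?S h)))"
        by (intro sum_mono hb)
      also have "\<dots> = 2 * (\<Sum>h<H. LINT w|M. indicator (?S h) w * psi w) + (\<Sum>h<H. if good h then 0 else 2 * B\<^sup>2 * measure M (?S h))"
        by (simp add: sum.distrib sum_distrib_left)
      finally show ?thesis .
    qed
    have P2: "(\<Sum>h<H. LINT w|M. indicator (?S h) w * psi w) \<le> \<epsilon>/4"
      using sum2[OF ord psi_int psi_nn] psi_le by simp
    have P3: "(\<Sum>h<H. if good h then 0 else 2 * B\<^sup>2 * measure M (?S h)) \<le> real (card {h. h < H \<and> \<not> good h}) * (4 * B\<^sup>2 / real H)"
    proof -
      have "(\<Sum>h<H. if good h then 0 else 2 * B\<^sup>2 * measure M (?S h)) \<le> (\<Sum>h<H. if good h then 0 else 4 * B\<^sup>2 / real H)"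
      proof (rule sum_mono)
        fix h assume "h \<in> {..<H}"
        then have "measure M (?S h) \<le> 2 / real H" using pr by simp
        then have "2 * B\<^sup>2 * measure M (?S h) \<le> 2 * B\<^sup>2 * (2 / real H)" by (intro mult_left_mono) auto
        then show "(if good h then 0 else 2 * B\<^sup>2 * measure M (?S h)) \<le> (if good h then 0 else 4 * B\<^sup>2 / real H)"
          by simp
      qed
      also have "(\<Sum>h<H. if good h then 0 else 4 * B\<^sup>2 / real H) = real (card {h. h < H \<and> \<not> good h}) * (4 * B\<^sup>2 / real H)"
      proof -
        have "(\<Sum>h<H. if good h then 0 else 4 * B\<^sup>2 / real H) = (\<Sum>h\<in>{..<H} \<inter> - {h. good h}. 4 * B\<^sup>2 / real H)"
          by (simp add: sum.If_cases)
        also have "{..<H} \<inter> - {h. good h} = {h. h < H \<and> \<not> good h}" by auto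
        finally show ?thesis by simp
      qed
      finally show ?thesis .
    qed
    have P4: "real (card {h. h < H \<and> \<not> good h}) \<le> 2 * (2 * real R * real n + 1)"
    proof -
      have "{h. h < H \<and> \<not> good h} \<subseteq> (\<Union>g\<in>G. {h. h < H \<and> g \<in> slice a H h})"
        unfolding good_def by auto
      then have "card {h. h < H \<and> \<not> good h} \<le> card (\<Union>g\<in>G. {h. h < H \<and> g \<in> slice a H h})"
        by (intro card_mono) (auto simp: G_def grid_finite)
      also have "\<dots> \<le> (\<Sum>g\<in>G. card {h. h < H \<and> g \<in> slice a H h})"
        by (rule card_UN_le) (simp add: G_def grid_finite)
      also have "\<dots> \<le> card G * 2"
        using sum_bounded_above[of G "\<lambda>g. card {h. h < H \<and> g \<in> slice a H h}" 2] slice_card2[OF ord] by simp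
      also have "\<dots> \<le> (2 * R * n + 1) * 2" unfolding G_def using grid_card by (intro mult_right_mono) auto
      finally have "real (card {h. h < H \<and> \<not> good h}) \<le> real ((2 * R * n + 1) * 2)" by (simp only: of_nat_le_iff)
      then show ?thesis by simp
    qed
    have "real (card {h. h < H \<and> \<not> good h}) * (4 * B\<^sup>2 / real H) \<le> 2 * (2 * real R * real n + 1) * (4 * B\<^sup>2 / real H)"
      using P4 by (intro mult_right_mono) auto
    then have main: "(\<Sum>h<H. LINT w|M. indicator (?S h) w * (norm (m (Y w) - c h))\<^sup>2)
        \<le> 2 * (\<epsilon>/4) + 2 * (2 * real R * real n + 1) * (4 * B\<^sup>2 / real H)"
      using P1 P2 P3 by linarith
    have "C / \<epsilon> < real H"
    proof -
      have "C / \<epsilon> \<le> real (nat \<lceil>C / \<epsilon>\<rceil>)" by linarith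
      also have "\<dots> < real K" unfolding K_def by simp
      also have "\<dots> \<le> real H" using HK by simp
      finally show ?thesis .
    qed
    then have "C < real H * \<epsilon>" using e by (simp add: divide_less_eq mult.commute)
    then have "2 * (2 * real R * real n + 1) * (4 * B\<^sup>2 / real H) \<le> \<epsilon>/2"
      using Hpos unfolding C_def by (simp add: field_simps)
    then show "\<exists>c. (\<Sum>h<H. LINT w|M. indicator (?S h) w * (norm (m (Y w) - c h))\<^sup>2) \<le> \<epsilon>"
      using main by (intro exI[of _ c]) linarith
  qed
qed

end


context sl begin

definition mu :: "real ^ 'p" where "mu = (\<chi> i. LINT w|M. m (Y w) $ i)"
definition NN :: "(real ^ 'p) set" where "NN = {v. AE w in M. v \<bullet> (m (Y w) - mu) = 0}"
definition V :: "real ^ 'p \<Rightarrow> real" where "V v = (LINT w|M. (v \<bullet> (m (Y w) - mu))\<^sup>2)"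

lemma int_inner: "(LINT w|M. v \<bullet> m (Y w)) = v \<bullet> mu"
proof -
  have "(LINT w|M. v \<bullet> m (Y w)) = (LINT w|M. (\<Sum>i\<in>UNIV. v $ i * m (Y w) $ i))"
    by (simp add: inner_vec_def)
  also have "\<dots> = (\<Sum>i\<in>UNIV. LINT w|M. v $ i * m (Y w) $ i)"
    by (rule Bochner_Integration.integral_sum) (intro integrable_mult_right sqi_int Zi)
  also have "\<dots> = (\<Sum>i\<in>UNIV. v $ i * mu $ i)"
    unfolding mu_def by simp
  finally show ?thesis by (simp add: inner_vec_def)
qed

lemma NN_subspace: "subspace NN"
proof -
  have "0 \<in> NN" unfolding NN_def by simp
  moreover have "x + y \<in> NN" if "x \<in> NN" "y \<in> NN" for x y
  proof -
    have "AE w in M. x \<bullet> (m (Y w) - mu) = 0" "AE w in M. y \<bullet> (m (Y w) - mu) = 0"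
      using that unfolding NN_def by auto
    then have "AE w in M. (x + y) \<bullet> (m (Y w) - mu) = 0"
      by eventually_elim (simp add: inner_add_left)
    then show ?thesis unfolding NN_def by simp
  qed
  moreover have "c *\<^sub>R x \<in> NN" if "x \<in> NN" for x c
  proof -
    have "AE w in M. x \<bullet> (m (Y w) - mu) = 0" using that unfolding NN_def by auto
    then have "AE w in M. (c *\<^sub>R x) \<bullet> (m (Y w) - mu) = 0"
      by eventually_elim simp
    then show ?thesis unfolding NN_def by simp
  qed
  ultimately show ?thesis unfolding subspace_def by blast
qed

lemma V_nonneg: "0 \<le> V v"
  unfolding V_def by simp

lemma V_int: "integrable M (\<lambda>w. (v \<bullet> (m (Y w) - mu))\<^sup>2)"
  by (rule sqi_sq[OF sqi_inner])

lemma V_scale: "V (c *\<^sub>R v) = c\<^sup>2 * V v"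
  unfolding V_def by (simp add: power_mult_distrib)

lemma V_zero: "V v = 0 \<Longrightarrow> v \<in> NN"
proof -
  assume "V v = 0"
  then have "AE w in M. (v \<bullet> (m (Y w) - mu))\<^sup>2 = 0"
    unfolding V_def using integral_nonneg_eq_0_iff_AE[OF V_int] by simp
  then show "v \<in> NN" unfolding NN_def by simp
qed

lemma V_cont: "continuous_on UNIV V"
proof -
  define C where "C i j = (LINT w|M. (m (Y w) - mu) $ i * (m (Y w) - mu) $ j)" for i j
  have "V v = (\<Sum>i\<in>UNIV. \<Sum>j\<in>UNIV. v $ i * v $ j * C i j)" for v
  proof -
    have eq: "(v \<bullet> (m (Y w) - mu))\<^sup>2 = (\<Sum>i\<in>UNIV. \<Sum>j\<in>UNIV. v $ i * v $ j * ((m (Y w) - mu) $ i * (m (Y w) - mu) $ j))" for w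
      unfolding power2_eq_square inner_vec_def inner_real_def sum_product by (simp add: algebra_simps)
    have "V v = (LINT w|M. (\<Sum>i\<in>UNIV. \<Sum>j\<in>UNIV. v $ i * v $ j * ((m (Y w) - mu) $ i * (m (Y w) - mu) $ j)))"
      unfolding V_def eq ..
    also have "\<dots> = (\<Sum>i\<in>UNIV. LINT w|M. (\<Sum>j\<in>UNIV. v $ i * v $ j * ((m (Y w) - mu) $ i * (m (Y w) - mu) $ j)))"
      by (rule Bochner_Integration.integral_sum)
         (intro Bochner_Integration.integrable_sum integrable_mult_right sqi_mult Zci)
    also have "\<dots> = (\<Sum>i\<in>UNIV. \<Sum>j\<in>UNIV. LINT w|M. v $ i * v $ j * ((m (Y w) - mu) $ i * (m (Y w) - mu) $ j))"
      by (intro sum.cong refl Bochner_Integration.integral_sum integrable_mult_right sqi_mult Zci)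
    also have "\<dots> = (\<Sum>i\<in>UNIV. \<Sum>j\<in>UNIV. v $ i * v $ j * C i j)"
      unfolding C_def by simp
    finally show ?thesis .
  qed
  then have "V = (\<lambda>v. \<Sum>i\<in>UNIV. \<Sum>j\<in>UNIV. v $ i * v $ j * C i j)" by auto
  moreover have "continuous_on UNIV (\<lambda>v::real^'p. \<Sum>i\<in>UNIV. \<Sum>j\<in>UNIV. v $ i * v $ j * C i j)"
    by (intro continuous_intros)
  ultimately show ?thesis by simp
qed

lemma lam: "\<exists>l>0. \<forall>u. (\<forall>x\<in>NN. u \<bullet> x = 0) \<longrightarrow> l * (norm u)\<^sup>2 \<le> V u"
proof -
  define T where "T = sphere (0::real^'p) 1 \<inter> (\<Inter>x\<in>NN. {u. x \<bullet> u = 0})"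
  have memT: "(1 / norm u) *\<^sub>R u \<in> T" if "\<forall>x\<in>NN. u \<bullet> x = 0" "u \<noteq> 0" for u
    using that unfolding T_def by (auto simp: inner_commute)
  have scale: "V u = (norm u)\<^sup>2 * V ((1 / norm u) *\<^sub>R u)" if "u \<noteq> 0" for u
    using that by (simp add: V_scale power_divide)
  show ?thesis
  proof (cases "T = {}")
    case True
    show ?thesis
    proof (intro exI[of _ 1] conjI allI impI)
      fix u assume u: "\<forall>x\<in>NN. u \<bullet> x = 0"
      have "u = 0" using memT[OF u] True by blast
      then show "1 * (norm u)\<^sup>2 \<le> V u" using V_nonneg[of u] by simp
    qed simp
  next
    case False
    have cT: "compact T" unfolding T_def
      by (intro compact_Int_closed compact_sphere closed_INT ballI closed_hyperplane)
    obtain u0 where u0: "u0 \<in> T" "\<And>y. y \<in> T \<Longrightarrow> V u0 \<le> V y"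
      using continuous_attains_inf[OF cT False continuous_on_subset[OF V_cont]] by blast
    have pos: "V u0 > 0"
    proof (rule ccontr)
      assume "\<not> V u0 > 0"
      then have "V u0 = 0" using V_nonneg[of u0] by simp
      then have "u0 \<in> NN" by (rule V_zero)
      then have "u0 \<bullet> u0 = 0" using u0(1) unfolding T_def by auto
      then show False using u0(1) unfolding T_def by simp
    qed
    show ?thesis
    proof (intro exI[of _ "V u0"] conjI allI impI pos)
      fix u assume u: "\<forall>x\<in>NN. u \<bullet> x = 0"
      show "V u0 * (norm u)\<^sup>2 \<le> V u"
      proof (cases "u = 0")
        case True then show ?thesis using V_nonneg[of u] by simp
      next
        case False
        have "V u0 \<le> V ((1 / norm u) *\<^sub>R u)" by (rule u0(2)[OF memT[OF u False]])
        then have "V u0 * (norm u)\<^sup>2 \<le> V ((1 / norm u) *\<^sub>R u) * (norm u)\<^sup>2"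
          by (rule mult_right_mono) simp
        then show ?thesis using scale[OF False] by (simp add: mult.commute)
      qed
    qed
  qed
qed

end


context sl begin

lemma stable:
  assumes g: "0 < \<gamma>" "\<gamma> < 1" and t: "\<tau> > 1"
  shows "\<exists>K>0. \<forall>H a. K \<le> H \<longrightarrow> (\<forall>i j. 1 \<le> i \<longrightarrow> i < j \<longrightarrow> j \<le> H - 1 \<longrightarrow> a i < a j) \<longrightarrow>
        (\<forall>h<H. (1 - \<gamma>) / real H \<le> measure M (Y -` slice a H h \<inter> space M) \<and>
                measure M (Y -` slice a H h \<inter> space M) \<le> (1 + \<gamma>) / real H) \<longrightarrow>
        (\<forall>\<beta>::real ^ 'p. norm \<beta> = 1 \<longrightarrow>
           (1 / real H) * (\<Sum>h<H. cond_var M (Y -` slice a H h \<inter> space M) (\<lambda>w. \<beta> \<bullet> m (Y w)))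
             \<le> (1 / \<tau>) * var_rv M (\<lambda>w. \<beta> \<bullet> m (Y w)))"
proof -
  obtain l where l: "l > 0" "\<And>u. \<forall>x\<in>NN. u \<bullet> x = 0 \<Longrightarrow> l * (norm u)\<^sup>2 \<le> V u"
    using lam by blast
  define eps where "eps = l * (1 - \<gamma>) / \<tau>"
  have eps: "eps > 0" unfolding eps_def using l g t by simp
  obtain K where K: "K > 0" and KP: "\<And>H a. K \<le> H \<Longrightarrow> (\<forall>i j. 1 \<le> i \<longrightarrow> i < j \<longrightarrow> j \<le> H - 1 \<longrightarrow> a i < a j) \<Longrightarrow>
     (\<forall>h<H. measure M (Y -` slice a H h \<inter> space M) \<le> 2 / real H) \<Longrightarrow>
     (\<exists>c. (\<Sum>h<H. LINT w|M. indicator (Y -` slice a H h \<inter> space M) w * (norm (m (Y w) - c h))\<^sup>2) \<le> eps)"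
    using approx[OF eps] by blast
  have spanNN: "span NN = NN" using NN_subspace by (simp add: span_eq_iff)
  show ?thesis
  proof (intro exI[of _ K] conjI K allI impI)
    fix H :: nat and a :: "nat \<Rightarrow> real" and \<beta> :: "real ^ 'p"
    assume HK: "K \<le> H"
      and ord: "\<forall>i j. 1 \<le> i \<longrightarrow> i < j \<longrightarrow> j \<le> H - 1 \<longrightarrow> a i < a j"
      and pr: "\<forall>h<H. (1 - \<gamma>) / real H \<le> measure M (Y -` slice a H h \<inter> space M) \<and>
                measure M (Y -` slice a H h \<inter> space M) \<le> (1 + \<gamma>) / real H"
      and nb: "norm \<beta> = 1"
    let ?S = "\<lambda>h. Y -` slice a H h \<inter> space M"
    have Hpos: "real H > 0" using HK K by simp
    have pr2: "\<forall>h<H. measure M (?S h) \<le> 2 / real H"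
    proof (intro allI impI)
      fix h assume "h < H"
      then have "measure M (?S h) \<le> (1 + \<gamma>) / real H" using pr by simp
      also have "\<dots> \<le> 2 / real H" using g Hpos by (intro divide_right_mono) auto
      finally show "measure M (?S h) \<le> 2 / real H" .
    qed
    obtain c where c: "(\<Sum>h<H. LINT w|M. indicator (?S h) w * (norm (m (Y w) - c h))\<^sup>2) \<le> eps"
      using KP[OF HK ord pr2] by blast
    obtain n u where n: "n \<in> span NN" and u: "\<And>w. w \<in> span NN \<Longrightarrow> orthogonal u w" and bu: "\<beta> = n + u"
      using orthogonal_subspace_decomp_exists[of NN \<beta>] by blast
    have nN: "n \<in> NN" using n spanNN by simp
    have uperp: "\<forall>x\<in>NN. u \<bullet> x = 0" using u spanNN unfolding orthogonal_def by simp
    have nAE: "AE w in M. n \<bullet> (m (Y w) - mu) = 0" using nN unfolding NN_def by simp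
    have var: "var_rv M (\<lambda>w. \<beta> \<bullet> m (Y w)) = V u"
    proof -
      have "var_rv M (\<lambda>w. \<beta> \<bullet> m (Y w)) = (LINT w|M. (\<beta> \<bullet> m (Y w) - \<beta> \<bullet> mu)\<^sup>2)"
        unfolding var_rv_def int_inner ..
      also have "\<dots> = (LINT w|M. (u \<bullet> (m (Y w) - mu))\<^sup>2)"
      proof (rule integral_cong_AE)
        show "(\<lambda>w. (\<beta> \<bullet> m (Y w) - \<beta> \<bullet> mu)\<^sup>2) \<in> borel_measurable M"
          using sqi_innerZ[of \<beta>] unfolding sqi_def by measurable
        show "(\<lambda>w. (u \<bullet> (m (Y w) - mu))\<^sup>2) \<in> borel_measurable M"
          using sqi_inner[of u mu] unfolding sqi_def by measurable
        show "AE w in M. (\<beta> \<bullet> m (Y w) - \<beta> \<bullet> mu)\<^sup>2 = (u \<bullet> (m (Y w) - mu))\<^sup>2"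
          using nAE by eventually_elim (simp add: bu inner_add_left inner_diff_right)
      qed
      finally show ?thesis unfolding V_def .
    qed
    define I where "I h = (LINT w|M. indicator (?S h) w * (norm (m (Y w) - c h))\<^sup>2)" for h
    have I_nn: "0 \<le> I h" for h unfolding I_def by simp
    have slice_bd: "cond_var M (?S h) (\<lambda>w. \<beta> \<bullet> m (Y w)) \<le> ((norm u)\<^sup>2 * real H / (1 - \<gamma>)) * I h"
      if h: "h < H" for h
    proof -
      have Pl: "(1 - \<gamma>) / real H \<le> measure M (?S h)" using pr h by simp
      have Ppos: "measure M (?S h) > 0" using Pl g Hpos by (smt (verit) divide_pos_pos)
      define d where "d = u \<bullet> c h + n \<bullet> mu"
      have "cond_var M (?S h) (\<lambda>w. \<beta> \<bullet> m (Y w)) \<le> (LINT w|M. indicator (?S h) w * (\<beta> \<bullet> m (Y w) - d)\<^sup>2) / measure M (?S h)"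
        by (rule cond_var_le[OF _ Sl_sets Ppos])
           (use sqi_innerZ[of \<beta>] in \<open>auto simp: sqi_def intro: sqi_int finite_measure_axioms\<close>)
      also have "(LINT w|M. indicator (?S h) w * (\<beta> \<bullet> m (Y w) - d)\<^sup>2) = (LINT w|M. indicator (?S h) w * (u \<bullet> (m (Y w) - c h))\<^sup>2)"
      proof (rule integral_cong_AE)
        show "(\<lambda>w. indicator (?S h) w * (\<beta> \<bullet> m (Y w) - d)\<^sup>2) \<in> borel_measurable M"
          using sqi_innerZ[of \<beta>] Sl_sets[of a H h] unfolding sqi_def by measurable
        show "(\<lambda>w. indicator (?S h) w * (u \<bullet> (m (Y w) - c h))\<^sup>2) \<in> borel_measurable M"
          using sqi_inner[of u "c h"] Sl_sets[of a H h] unfolding sqi_def by measurable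
        show "AE w in M. indicator (?S h) w * (\<beta> \<bullet> m (Y w) - d)\<^sup>2 = indicator (?S h) w * (u \<bullet> (m (Y w) - c h))\<^sup>2"
          using nAE by eventually_elim (simp add: bu d_def inner_add_left inner_diff_right)
      qed
      also have "(LINT w|M. indicator (?S h) w * (u \<bullet> (m (Y w) - c h))\<^sup>2) \<le> (LINT w|M. (norm u)\<^sup>2 * (indicator (?S h) w * (norm (m (Y w) - c h))\<^sup>2))"
      proof (rule integral_mono)
        show "integrable M (\<lambda>w. indicator (?S h) w * (u \<bullet> (m (Y w) - c h))\<^sup>2)"
          using integrable_real_mult_indicator[OF Sl_sets sqi_sq[OF sqi_inner[of u "c h"]]]
          by (simp add: mult.commute)
        show "integrable M (\<lambda>w. (norm u)\<^sup>2 * (indicator (?S h) w * (norm (m (Y w) - c h))\<^sup>2))"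
          using integrable_real_mult_indicator[OF Sl_sets int_norm2[of "c h"]]
          by (intro integrable_mult_right) (simp add: mult.commute)
        fix w
        have "\<bar>u \<bullet> (m (Y w) - c h)\<bar> \<le> norm u * norm (m (Y w) - c h)" by (rule Cauchy_Schwarz_ineq2)
        then have "(u \<bullet> (m (Y w) - c h))\<^sup>2 \<le> (norm u * norm (m (Y w) - c h))\<^sup>2"
          by (metis abs_ge_zero power2_abs power_mono)
        then show "indicator (?S h) w * (u \<bullet> (m (Y w) - c h))\<^sup>2 \<le> (norm u)\<^sup>2 * (indicator (?S h) w * (norm (m (Y w) - c h))\<^sup>2)"
          by (auto simp: indicator_def power_mult_distrib)
      qed
      also have "(LINT w|M. (norm u)\<^sup>2 * (indicator (?S h) w * (norm (m (Y w) - c h))\<^sup>2)) = (norm u)\<^sup>2 * I h"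
        unfolding I_def by simp
      finally have "cond_var M (?S h) (\<lambda>w. \<beta> \<bullet> m (Y w)) \<le> (norm u)\<^sup>2 * I h / measure M (?S h)"
        using Ppos by (simp add: divide_right_mono)
      also have "\<dots> \<le> (norm u)\<^sup>2 * I h / ((1 - \<gamma>) / real H)"
        using Pl Ppos g Hpos I_nn[of h] by (intro divide_left_mono mult_nonneg_nonneg mult_pos_pos) auto
      also have "\<dots> = ((norm u)\<^sup>2 * real H / (1 - \<gamma>)) * I h" using g by (simp add: field_simps)
      finally show ?thesis .
    qed
    have "(1 / real H) * (\<Sum>h<H. cond_var M (?S h) (\<lambda>w. \<beta> \<bullet> m (Y w)))
        \<le> (1 / real H) * (\<Sum>h<H. ((norm u)\<^sup>2 * real H / (1 - \<gamma>)) * I h)"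
      using Hpos by (intro mult_left_mono sum_mono slice_bd) auto
    also have "\<dots> = ((norm u)\<^sup>2 / (1 - \<gamma>)) * (\<Sum>h<H. I h)"
    proof -
      have "(\<Sum>h<H. ((norm u)\<^sup>2 * real H / (1 - \<gamma>)) * I h) = ((norm u)\<^sup>2 * real H / (1 - \<gamma>)) * (\<Sum>h<H. I h)"
        by (rule sum_distrib_left[symmetric])
      then show ?thesis using Hpos by simp
    qed
    also have "\<dots> \<le> ((norm u)\<^sup>2 / (1 - \<gamma>)) * eps"
      using c g unfolding I_def by (intro mult_left_mono) auto
    also have "\<dots> = (1 / \<tau>) * (l * (norm u)\<^sup>2)"
      unfolding eps_def using g t by (simp add: field_simps)
    also have "\<dots> \<le> (1 / \<tau>) * V u"
      using l(2)[OF uperp] t by (intro mult_left_mono) auto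
    finally show "(1 / real H) * (\<Sum>h<H. cond_var M (?S h) (\<lambda>w. \<beta> \<bullet> m (Y w))) \<le> (1 / \<tau>) * var_rv M (\<lambda>w. \<beta> \<bullet> m (Y w))"
      using var by simp
  qed
qed

end


lemma sq_le_powr: "ell > 2 \<Longrightarrow> t\<^sup>2 \<le> 1 + \<bar>t::real\<bar> powr ell"
proof (cases "\<bar>t\<bar> \<le> 1")
  case True
  assume "ell > 2"
  have "t\<^sup>2 = \<bar>t\<bar>\<^sup>2" by simp
  also have "\<dots> \<le> 1" using True by (simp add: abs_square_le_1)
  moreover have "0 \<le> \<bar>t\<bar> powr ell" by simp
  ultimately show ?thesis by linarith
next
  case False
  assume l: "ell > 2"
  have "t\<^sup>2 = \<bar>t\<bar> powr 2" using False by (simp add: powr_numeral)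
  also have "\<dots> \<le> \<bar>t\<bar> powr ell" using False l by (intro powr_mono) auto
  finally show ?thesis by simp
qed

theorem mainTheorem2:
  fixes M :: "'a measure" and X :: "'a \<Rightarrow> real ^ 'p" and Y :: "'a \<Rightarrow> real"
    and m :: "real \<Rightarrow> real ^ 'p" and \<gamma> ell c\<^sub>1 \<tau> :: real
  assumes "prob_space M"
    and "0 < \<gamma>" "\<gamma> < 1"
    and "X \<in> borel_measurable M" "Y \<in> borel_measurable M"
    and "ell > 2" "c\<^sub>1 > 0"
    and "\<forall>\<beta>::real ^ 'p. norm \<beta> = 1 \<longrightarrow>
           (\<integral>\<^sup>+ w. ennreal (\<bar>\<beta> \<bullet> X w\<bar> powr ell) \<partial>M) \<le> ennreal c\<^sub>1"
    and "\<forall>y. measure M (Y -` {y} \<inter> space M) = 0"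
    and "\<forall>i. AE w in M. real_cond_exp M (vimage_algebra (space M) Y borel) (\<lambda>v. X v $ i) w
                        = m (Y w) $ i"
    and "continuous_on UNIV m"
    and "\<tau> > 1"
  shows "\<exists>K::nat. K \<ge> dim (span (range m)) \<and> weak_sliced_stable \<gamma> M Y m K \<tau>"
proof -
  note PS = assms(1) and Xm = assms(4) and Ym = assms(5) and ell = assms(6) and mom = assms(8)
    and ce = assms(10) and mc = assms(11)
  interpret prob_space M by (rule PS)
  define F where "F = vimage_algebra (space M) Y borel"
  have subalg: "subalgebra M F"
    unfolding subalgebra_def F_def
  proof
    show "space (vimage_algebra (space M) Y borel) = space M" by simp
    have "Y \<in> space M \<rightarrow> space borel" by simp
    then show "sets (vimage_algebra (space M) Y borel) \<subseteq> sets M"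
      using measurable_sets[OF Ym] by (auto simp: sets_vimage_algebra2)
  qed
  interpret fs: finite_measure_subalgebra M F
    by unfold_locales (rule subalg)
  have sq: "integrable M (\<lambda>w. (m (Y w) $ i)\<^sup>2)" for i
  proof -
    have Xim[measurable]: "(\<lambda>w. X w $ i) \<in> borel_measurable M"
      by (rule measurable_compose[OF Xm vec_nth_meas])
    have pint: "integrable M (\<lambda>w. \<bar>X w $ i\<bar> powr ell)"
    proof (rule integrableI_bounded)
      show "(\<lambda>w. \<bar>X w $ i\<bar> powr ell) \<in> borel_measurable M" by measurable
      have "(\<integral>\<^sup>+ w. ennreal (norm (\<bar>X w $ i\<bar> powr ell)) \<partial>M) = (\<integral>\<^sup>+ w. ennreal (\<bar>axis i 1 \<bullet> X w\<bar> powr ell) \<partial>M)"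
        by (simp add: inner_axis')
      also have "\<dots> \<le> ennreal c\<^sub>1" using mom by simp
      also have "\<dots> < \<infinity>" by simp
      finally show "(\<integral>\<^sup>+ w. ennreal (norm (\<bar>X w $ i\<bar> powr ell)) \<partial>M) < \<infinity>" .
    qed
    have x2: "integrable M (\<lambda>w. (X w $ i)\<^sup>2)"
    proof (rule Bochner_Integration.integrable_bound[where f="\<lambda>w. 1 + \<bar>X w $ i\<bar> powr ell"])
      show "integrable M (\<lambda>w. 1 + \<bar>X w $ i\<bar> powr ell)" using pint by simp
      show "(\<lambda>w. (X w $ i)\<^sup>2) \<in> borel_measurable M" by measurable
      show "AE w in M. norm ((X w $ i)\<^sup>2) \<le> norm (1 + \<bar>X w $ i\<bar> powr ell)"
        using sq_le_powr[OF ell] by (intro always_eventually allI) simp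
    qed
    have x1: "integrable M (\<lambda>w. X w $ i)"
      by (rule sqi_int) (use x2 in \<open>simp add: sqi_def\<close>)
    have "integrable M (\<lambda>w. (real_cond_exp M F (\<lambda>v. X v $ i) w)\<^sup>2)"
      by (rule fs.integrable_convex_cond_exp[where I=UNIV and q="\<lambda>x. x\<^sup>2"])
         (use x1 x2 convex_power2 in auto)
    moreover have "AE w in M. (real_cond_exp M F (\<lambda>v. X v $ i) w)\<^sup>2 = (m (Y w) $ i)\<^sup>2"
    proof -
      have "AE w in M. real_cond_exp M F (\<lambda>v. X v $ i) w = m (Y w) $ i" using ce unfolding F_def by blast
      then show ?thesis by eventually_elim simp
    qed
    moreover have "(\<lambda>w. (m (Y w) $ i)\<^sup>2) \<in> borel_measurable M"
    proof -
      have "m \<in> borel_measurable borel" using mc by (rule borel_measurable_continuous_onI)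
      then have "(\<lambda>w. m (Y w)) \<in> borel_measurable M" using Ym by measurable
      then have "(\<lambda>w. m (Y w) $ i) \<in> borel_measurable M" by (rule measurable_compose[OF _ vec_nth_meas])
      then show ?thesis by measurable
    qed
    ultimately show ?thesis using integrable_cong_AE_imp by blast
  qed
  interpret sl M Y m
    by unfold_locales (use Ym mc sq in auto)
  obtain K0 where K0: "K0 > 0" and KP: "\<And>H a. K0 \<le> H \<Longrightarrow> (\<forall>i j. 1 \<le> i \<longrightarrow> i < j \<longrightarrow> j \<le> H - 1 \<longrightarrow> a i < a j) \<Longrightarrow>
        (\<forall>h<H. (1 - \<gamma>) / real H \<le> measure M (Y -` slice a H h \<inter> space M) \<and>
                measure M (Y -` slice a H h \<inter> space M) \<le> (1 + \<gamma>) / real H) \<Longrightarrow>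
        (\<forall>\<beta>::real ^ 'p. norm \<beta> = 1 \<longrightarrow>
           (1 / real H) * (\<Sum>h<H. cond_var M (Y -` slice a H h \<inter> space M) (\<lambda>w. \<beta> \<bullet> m (Y w)))
             \<le> (1 / \<tau>) * var_rv M (\<lambda>w. \<beta> \<bullet> m (Y w)))"
    using stable[OF assms(2,3,12)] by blast
  define K where "K = max K0 (dim (span (range m)))"
  show ?thesis
  proof (intro exI[of _ K] conjI)
    show "dim (span (range m)) \<le> K" unfolding K_def by simp
    show "weak_sliced_stable \<gamma> M Y m K \<tau>"
      unfolding weak_sliced_stable_def
    proof (intro conjI allI impI)
      show "continuous_on UNIV m" by (rule mc)
      show "0 < K" using K0 unfolding K_def by simp
      show "1 < \<tau>" by (rule assms(12))
      fix H a and \<beta> :: "real ^ 'p"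
      assume "K \<le> H" and ord: "\<forall>i j. 1 \<le> i \<longrightarrow> i < j \<longrightarrow> j \<le> H - 1 \<longrightarrow> a i < a j"
        and pr: "\<forall>h<H. (1 - \<gamma>) / real H \<le> measure M (Y -` slice a H h \<inter> space M) \<and>
                measure M (Y -` slice a H h \<inter> space M) \<le> (1 + \<gamma>) / real H"
        and nb: "norm \<beta> = 1"
      have "K0 \<le> H" using \<open>K \<le> H\<close> unfolding K_def by simp
      then show "(1 / real H) * (\<Sum>h<H. cond_var M (Y -` slice a H h \<inter> space M) (\<lambda>w. \<beta> \<bullet> m (Y w)))
             \<le> (1 / \<tau>) * var_rv M (\<lambda>w. \<beta> \<bullet> m (Y w))"
        using KP[OF _ ord pr] nb by blast
    qed
  qed
qed


end
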